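(* Let $\mathcal N=(G,\beta,r)$ be a potential-based flow network with $G=(V,A)$, and let $s,t\in V$ be distinct. Suppose there exists a potential-based $(s,t)$-flow of value $d>0$ in $\mathcal N$ with potentials $\pi\in[0,\bar\pi]^V$, where $\bar\pi>0$. Then for every integer $k\ge1$ and all $k$ disjoint $(s,t)$-cuts $S_1\subseteq\dots\subseteq S_k\subseteq V$, $$\frac{1}{k\sqrt[r]{k}}\sum_{i=1}^k\sum_{a\in\delta(S_i)}\mu_a\geq\frac{d}{\sqrt[r]{\bar\pi}}.$$
   Context: A potential-based flow network $\mathcal N=(G,\beta,r)$ consists of a weakly connected directed multigraph $G=(V,A)$ without loops, resistances $\beta\in\mathbb{R}^A_{>0}$ and a degree $r>0$; the conductance of arc $a$ is $\mu_a=\beta_a^{-1/r}$. A potential-based $(s,t)$-flow of value $d$ is a pair $(\pi,f)\in\mathbb{R}^V\times\mathbb{R}^A$ with $\pi_u-\pi_v=\beta_a\,\mathrm{sign}(f_a)|f_a|^r$ for every arc $a=(u,v)$ and $\sum_{a\in\delta^+(v)}f_a-\sum_{a\in\delta^-(v)}f_a=b_v$ for all $v\in V$, where $b=d(\chi_s-\chi_t)$, $\chi_v$ the unit vector of $v$, and $\delta^+(v)$, $\delta^-(v)$ are the arcs leaving, resp. entering, $v$. For $S\subseteq V$, $\delta(S)$ is the set of arcs with one endpoint in $S$ and the other in $V\setminus S$ (either direction). An $(s,t)$-cut is a set $S\subseteq V$ with $s\in S$, $t\notin S$. Sets $S_1,\dots,S_k$ are $k$ disjoint $(s,t)$-cuts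 if each is an $(s,t)$-cut and $\delta(S_i)\cap\delta(S_j)=\emptyset$ for all $i\ne j$. *)

theory Defs
  imports Complex_Main
begin

text \<open>A directed multigraph G = (V, A): arcs form an abstract set A with
  tail and head maps tail, head (parallel arcs allowed).\<close>

definition pb_network ::
  "'v set \<Rightarrow> 'a set \<Rightarrow> ('a \<Rightarrow> 'v) \<Rightarrow> ('a \<Rightarrow> 'v) \<Rightarrow> ('a \<Rightarrow> real) \<Rightarrow> real \<Rightarrow> bool" where
  "pb_network V A tail head \<beta> r \<longleftrightarrow>
     finite V \<and> finite A \<and>
     (\<forall>a\<in>A. tail a \<in> V \<and> head a \<in> V \<and> tail a \<noteq> head a) \<and>
     (\<forall>a\<in>A. \<beta> a > 0) \<and> r > 0 \<and>
     (\<forall>u\<in>V. \<forall>v\<in>V. (u, v) \<in>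
        ({(tail a, head a) | a. a \<in> A} \<union> {(head a, tail a) | a. a \<in> A})\<^sup>*)"

definition conductance :: "('a \<Rightarrow> real) \<Rightarrow> real \<Rightarrow> 'a \<Rightarrow> real" where
  "conductance \<beta> r a = \<beta> a powr (- 1 / r)"

definition pb_flow ::
  "'v set \<Rightarrow> 'a set \<Rightarrow> ('a \<Rightarrow> 'v) \<Rightarrow> ('a \<Rightarrow> 'v) \<Rightarrow> ('a \<Rightarrow> real) \<Rightarrow> real \<Rightarrow>
   'v \<Rightarrow> 'v \<Rightarrow> real \<Rightarrow> ('v \<Rightarrow> real) \<Rightarrow> ('a \<Rightarrow> real) \<Rightarrow> bool" where
  "pb_flow V A tail head \<beta> r s t d \<pi> f \<longleftrightarrow>
     (\<forall>a\<in>A. \<pi> (tail a) - \<pi> (head a) = \<beta> a * sgn (f a) * \<bar>f a\<bar> powr r) \<and>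
     (\<forall>v\<in>V. (\<Sum>a\<in>{a\<in>A. tail a = v}. f a) - (\<Sum>a\<in>{a\<in>A. head a = v}. f a)
            = d * ((if v = s then 1 else 0) - (if v = t then 1 else 0)))"

definition cut_arcs :: "'v set \<Rightarrow> 'a set \<Rightarrow> ('a \<Rightarrow> 'v) \<Rightarrow> ('a \<Rightarrow> 'v) \<Rightarrow> 'v set \<Rightarrow> 'a set" where
  "cut_arcs V A tail head S =
     {a\<in>A. (tail a \<in> S \<and> head a \<in> V - S) \<or> (head a \<in> S \<and> tail a \<in> V - S)}"

definition st_cut :: "'v set \<Rightarrow> 'v \<Rightarrow> 'v \<Rightarrow> 'v set \<Rightarrow> bool" where
  "st_cut V s t S \<longleftrightarrow> S \<subseteq> V \<and> s \<in> S \<and> t \<notin> S"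

end

theory Submission imports Defs "HOL-Analysis.Analysis" begin
lemma tangent: fixes r t :: real assumes "r>0" "t\<ge>0" shows "(r+1)*t \<le> r + t powr (r+1)"
proof (cases "t=0")
  case True thus ?thesis using assms by simp
next
  case False
  have "1 powr (r/(r+1)) * (t powr (r+1)) powr (1/(r+1)) \<le> r/(r+1)*1 + 1/(r+1) * t powr (r+1)"
    by (rule Youngs_inequality_0) (use assms False in \<open>auto simp: field_simps\<close>)
  moreover have "(t powr (r+1)) powr (1/(r+1)) = t" using assms by (simp add: powr_powr)
  ultimately have "t \<le> r/(r+1) + t powr (r+1)/(r+1)" by simp
  also have "r/(r+1) + t powr (r+1)/(r+1) = (r + t powr (r+1))/(r+1)" by (simp add: add_divide_distrib)
  finally show ?thesis using assms by (simp add: pos_le_divide_eq mult.commute)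
qed

lemma arc_ineq: fixes \<beta> r c x :: real assumes "\<beta>>0" "r>0" "c>0" "x\<ge>0"
  shows "(r+1)*x \<le> r*c*\<beta> powr (-1/r) + \<beta> * x powr (r+1) / c powr r"
proof -
  define m where "m = \<beta> powr (-1/r)"
  have m: "m > 0" using assms by (simp add: m_def)
  have mr: "m powr r = 1/\<beta>" proof -
    have "m powr r = \<beta> powr (-1/r*r)" by (simp add: m_def powr_powr)
    also have "-1/r*r = -1" using assms by simp
    finally show ?thesis using assms by (simp add: powr_minus_divide)
  qed
  have "(r+1)*(x/(m*c)) \<le> r + (x/(m*c)) powr (r+1)"
    by (rule tangent) (use assms m in auto)
  hence "m*c*((r+1)*(x/(m*c))) \<le> m*c*(r + (x/(m*c)) powr (r+1))"
    using m assms by (intro mult_left_mono) auto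
  moreover have "m*c*((r+1)*(x/(m*c))) = (r+1)*x" using m assms by simp
  moreover have "(x/(m*c)) powr (r+1) = x powr (r+1) / ((m*c) * (m powr r * c powr r))"
    using m assms by (simp add: powr_divide powr_add powr_mult)
  moreover have "m*c*(r + x powr (r+1) / ((m*c) * (m powr r * c powr r))) = r*c*m + \<beta> * x powr (r+1) / c powr r"
    using m assms mr by (simp add: field_simps)
  ultimately show ?thesis by (simp add: m_def)
qed

lemma cutflow:
  fixes f :: "'a \<Rightarrow> real" and d :: real and tail head :: "'a \<Rightarrow> 'v"
  assumes fA: "finite A" and fV: "finite V" and arcs: "\<forall>a\<in>A. tail a \<in> V \<and> head a \<in> V"
    and cons: "\<forall>v\<in>V. (\<Sum>a\<in>{a\<in>A. tail a = v}. f a) - (\<Sum>a\<in>{a\<in>A. head a = v}. f a)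
            = d * ((if v = s then 1 else 0) - (if v = t then 1 else 0))"
    and SV: "S \<subseteq> V" and sS: "s \<in> S" and tS: "t \<notin> S"
  shows "d \<le> (\<Sum>a\<in>cut_arcs V A tail head S. \<bar>f a\<bar>)"
proof -
  have fS: "finite S" using SV fV finite_subset by blast
  have "(\<Sum>v\<in>S. (\<Sum>a\<in>{a\<in>A. tail a = v}. f a) - (\<Sum>a\<in>{a\<in>A. head a = v}. f a))
      = (\<Sum>v\<in>S. d * ((if v = s then 1 else 0) - (if v = t then 1 else 0)))"
  proof (intro sum.cong refl)
    fix v assume "v \<in> S"
    then have "v \<in> V" using SV by blast
    then show "(\<Sum>a\<in>{a\<in>A. tail a = v}. f a) - (\<Sum>a\<in>{a\<in>A. head a = v}. f a)
      = d * ((if v = s then 1 else 0) - (if v = t then 1 else 0))" using cons by blast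
  qed
  also have "\<dots> = (\<Sum>v\<in>S. (if v = s then d else 0) - (if v = t then d else 0))"
    by (intro sum.cong) auto
  also have "\<dots> = d" using sS tS fS by (simp add: sum_subtractf)
  finally have L: "(\<Sum>v\<in>S. (\<Sum>a\<in>{a\<in>A. tail a = v}. f a) - (\<Sum>a\<in>{a\<in>A. head a = v}. f a)) = d" .
  have T: "(\<Sum>v\<in>S. \<Sum>a\<in>{a\<in>A. g a = v}. f a) = (\<Sum>a\<in>A. if g a \<in> S then f a else 0)" for g :: "'a \<Rightarrow> 'v"
  proof -
    have "(\<Sum>v\<in>S. \<Sum>a\<in>{a\<in>A. g a = v}. f a) = (\<Sum>v\<in>S. \<Sum>a\<in>A. if g a = v then f a else 0)"
      using fA by (simp add: sum.inter_filter)
    also have "\<dots> = (\<Sum>a\<in>A. \<Sum>v\<in>S. if g a = v then f a else 0)" by (rule sum.swap)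
    also have "\<dots> = (\<Sum>a\<in>A. if g a \<in> S then f a else 0)" using fS by simp
    finally show ?thesis .
  qed
  have "d = (\<Sum>a\<in>A. (if tail a \<in> S then f a else 0) - (if head a \<in> S then f a else 0))"
    using L T[of tail] T[of head] by (simp add: sum_subtractf)
  also have "\<dots> \<le> (\<Sum>a\<in>A. if a \<in> cut_arcs V A tail head S then \<bar>f a\<bar> else 0)"
    using arcs by (intro sum_mono) (auto simp: cut_arcs_def)
  also have "\<dots> = (\<Sum>a\<in>cut_arcs V A tail head S. \<bar>f a\<bar>)"
    using fA by (simp add: sum.inter_filter[symmetric] cut_arcs_def)
  finally show ?thesis .
qed


lemma groupV:
  fixes f :: "'a \<Rightarrow> real" and \<pi> :: "'v \<Rightarrow> real"
  assumes fA: "finite A" and fV: "finite V" and arcs: "\<forall>a\<in>A. g a \<in> V"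
  shows "(\<Sum>v\<in>V. \<pi> v * (\<Sum>a\<in>{a\<in>A. g a = v}. f a)) = (\<Sum>a\<in>A. f a * \<pi> (g a))"
proof -
  have "(\<Sum>v\<in>V. \<pi> v * (\<Sum>a\<in>{a\<in>A. g a = v}. f a)) = (\<Sum>v\<in>V. \<Sum>a\<in>A. if g a = v then f a * \<pi> (g a) else 0)"
  proof (intro sum.cong refl)
    fix v assume "v \<in> V"
    have "\<pi> v * (\<Sum>a\<in>{a\<in>A. g a = v}. f a) = \<pi> v * (\<Sum>a\<in>A. if g a = v then f a else 0)"
      using fA by (simp add: sum.inter_filter)
    also have "\<dots> = (\<Sum>a\<in>A. \<pi> v * (if g a = v then f a else 0))" by (rule sum_distrib_left)
    also have "\<dots> = (\<Sum>a\<in>A. if g a = v then f a * \<pi> (g a) else 0)" by (intro sum.cong) auto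
    finally show "\<pi> v * (\<Sum>a\<in>{a\<in>A. g a = v}. f a) = (\<Sum>a\<in>A. if g a = v then f a * \<pi> (g a) else 0)" .
  qed
  also have "\<dots> = (\<Sum>a\<in>A. \<Sum>v\<in>V. if g a = v then f a * \<pi> (g a) else 0)" by (rule sum.swap)
  also have "\<dots> = (\<Sum>a\<in>A. f a * \<pi> (g a))" using fV arcs by (auto intro!: sum.cong)
  finally show ?thesis .
qed

lemma energy:
  fixes f \<beta> :: "'a \<Rightarrow> real" and \<pi> :: "'v \<Rightarrow> real" and r d :: real
  assumes fA: "finite A" and fV: "finite V" and arcs: "\<forall>a\<in>A. tail a \<in> V \<and> head a \<in> V"
    and pot: "\<forall>a\<in>A. \<pi> (tail a) - \<pi> (head a) = \<beta> a * sgn (f a) * \<bar>f a\<bar> powr r"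
    and cons: "\<forall>v\<in>V. (\<Sum>a\<in>{a\<in>A. tail a = v}. f a) - (\<Sum>a\<in>{a\<in>A. head a = v}. f a)
            = d * ((if v = s then 1 else 0) - (if v = t then 1 else 0))"
    and sV: "s \<in> V" and tV: "t \<in> V" and r: "r > 0"
  shows "(\<Sum>a\<in>A. \<beta> a * \<bar>f a\<bar> powr (r+1)) = d * (\<pi> s - \<pi> t)"
proof -
  have pw: "\<beta> a * \<bar>f a\<bar> powr (r+1) = f a * \<pi> (tail a) - f a * \<pi> (head a)" if "a \<in> A" for a
  proof -
    have "f a * \<pi> (tail a) - f a * \<pi> (head a) = \<beta> a * (f a * sgn (f a)) * \<bar>f a\<bar> powr r"
      using pot that by (simp add: right_diff_distrib[symmetric] mult_ac)
    also have "f a * sgn (f a) = \<bar>f a\<bar>" by (simp add: sgn_if)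
    also have "\<beta> a * \<bar>f a\<bar> * \<bar>f a\<bar> powr r = \<beta> a * \<bar>f a\<bar> powr (r+1)"
      by (cases "f a = 0") (auto simp: powr_add)
    finally show ?thesis by simp
  qed
  have "(\<Sum>a\<in>A. \<beta> a * \<bar>f a\<bar> powr (r+1)) = (\<Sum>a\<in>A. f a * \<pi> (tail a)) - (\<Sum>a\<in>A. f a * \<pi> (head a))"
    using pw by (simp add: sum_subtractf)
  also have "\<dots> = (\<Sum>v\<in>V. \<pi> v * ((\<Sum>a\<in>{a\<in>A. tail a = v}. f a) - (\<Sum>a\<in>{a\<in>A. head a = v}. f a)))"
    using groupV[of A V tail \<pi> f] groupV[of A V head \<pi> f] fA fV arcs
    by (simp add: right_diff_distrib sum_subtractf)
  also have "\<dots> = (\<Sum>v\<in>V. \<pi> v * (d * ((if v = s then 1 else 0) - (if v = t then 1 else 0))))"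
    using cons by (intro sum.cong) auto
  also have "\<dots> = d * (\<pi> s - \<pi> t)"
    using fV sV tV by (simp add: right_diff_distrib sum_subtractf if_distrib[of "\<lambda>x. _ * x"] cong: if_cong)
  finally show ?thesis .
qed


theorem theorem3:
  fixes V :: "'v set" and A :: "'a set" and tail head :: "'a \<Rightarrow> 'v"
    and \<beta> :: "'a \<Rightarrow> real" and r d \<pi>bar :: real and s t :: 'v
    and \<pi> :: "'v \<Rightarrow> real" and f :: "'a \<Rightarrow> real"
  assumes net: "pb_network V A tail head \<beta> r"
    and st: "s \<in> V" "t \<in> V" "s \<noteq> t"
    and flow: "pb_flow V A tail head \<beta> r s t d \<pi> f"
    and dpos: "d > 0"
    and pibar: "\<pi>bar > 0"
    and pot: "\<forall>v\<in>V. 0 \<le> \<pi> v \<and> \<pi> v \<le> \<pi>bar"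
  shows "\<forall>(k::nat) (S :: nat \<Rightarrow> 'v set). k \<ge> 1 \<longrightarrow>
           (\<forall>i\<in>{1..k}. st_cut V s t (S i)) \<longrightarrow>
           (\<forall>i\<in>{1..k}. \<forall>j\<in>{1..k}. i \<noteq> j \<longrightarrow>
               cut_arcs V A tail head (S i) \<inter> cut_arcs V A tail head (S j) = {}) \<longrightarrow>
           (\<forall>i\<in>{1..<k}. S i \<subseteq> S (Suc i)) \<longrightarrow>
           1 / (real k * real k powr (1 / r)) *
             (\<Sum>i=1..k. \<Sum>a\<in>cut_arcs V A tail head (S i). conductance \<beta> r a)
           \<ge> d / \<pi>bar powr (1 / r)"
proof (intro allI impI)
  fix k :: nat and S :: "nat \<Rightarrow> 'v set"
  assume k1: "k \<ge> 1" and cuts: "\<forall>i\<in>{1..k}. st_cut V s t (S i)"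
    and disj: "\<forall>i\<in>{1..k}. \<forall>j\<in>{1..k}. i \<noteq> j \<longrightarrow>
               cut_arcs V A tail head (S i) \<inter> cut_arcs V A tail head (S j) = {}"
  have fV: "finite V" and fA: "finite A" and arcs: "\<forall>a\<in>A. tail a \<in> V \<and> head a \<in> V"
    and bpos: "\<forall>a\<in>A. \<beta> a > 0" and rpos: "r > 0"
    using net unfolding pb_network_def by auto
  have potf: "\<forall>a\<in>A. \<pi> (tail a) - \<pi> (head a) = \<beta> a * sgn (f a) * \<bar>f a\<bar> powr r"
    and cons: "\<forall>v\<in>V. (\<Sum>a\<in>{a\<in>A. tail a = v}. f a) - (\<Sum>a\<in>{a\<in>A. head a = v}. f a)
            = d * ((if v = s then 1 else 0) - (if v = t then 1 else 0))"
    using flow unfolding pb_flow_def by auto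
  define C where "C i = cut_arcs V A tail head (S i)" for i
  define U where "U = (\<Union>i\<in>{1..k}. C i)"
  have CA: "C i \<subseteq> A" for i by (auto simp: C_def cut_arcs_def)
  have fC: "finite (C i)" for i using CA fA finite_subset by blast
  have UA: "U \<subseteq> A" using CA by (auto simp: U_def)
  have sumU: "(\<Sum>i=1..k. \<Sum>a\<in>C i. g a) = (\<Sum>a\<in>U. g a)" for g :: "'a \<Rightarrow> real"
    unfolding U_def using disj fC by (subst sum.UNION_disjoint) (auto simp: C_def)
  define M where "M = (\<Sum>a\<in>U. conductance \<beta> r a)"
  have kd: "real k * d \<le> (\<Sum>a\<in>U. \<bar>f a\<bar>)"
  proof -
    have "real k * d = (\<Sum>i=1..k. d)" by simp
    also have "\<dots> \<le> (\<Sum>i=1..k. \<Sum>a\<in>C i. \<bar>f a\<bar>)"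
    proof (rule sum_mono)
      fix i assume "i \<in> {1..k}"
      then have "S i \<subseteq> V" "s \<in> S i" "t \<notin> S i" using cuts by (auto simp: st_cut_def)
      then show "d \<le> (\<Sum>a\<in>C i. \<bar>f a\<bar>)" unfolding C_def
        using cutflow[OF fA fV _ cons] arcs by blast
    qed
    finally show ?thesis using sumU by simp
  qed
  have en: "(\<Sum>a\<in>U. \<beta> a * \<bar>f a\<bar> powr (r+1)) \<le> d * \<pi>bar"
  proof -
    have "(\<Sum>a\<in>U. \<beta> a * \<bar>f a\<bar> powr (r+1)) \<le> (\<Sum>a\<in>A. \<beta> a * \<bar>f a\<bar> powr (r+1))"
      using UA fA bpos by (intro sum_mono2) auto
    also have "\<dots> = d * (\<pi> s - \<pi> t)"
      using energy[OF fA fV arcs potf cons st(1) st(2) rpos] .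
    also have "\<dots> \<le> d * \<pi>bar"
    proof -
      have "\<pi> s \<le> \<pi>bar" "0 \<le> \<pi> t" using pot st by auto
      thus ?thesis using dpos by (intro mult_left_mono) auto
    qed
    finally show ?thesis .
  qed
  have kpos: "real k > 0" using k1 by simp
  define c where "c = (\<pi>bar / real k) powr (1/r)"
  have cpos: "c > 0" using pibar kpos by (simp add: c_def)
  have cr: "c powr r = \<pi>bar / real k"
    using pibar kpos rpos by (simp add: c_def powr_powr)
  have "(r+1) * (\<Sum>a\<in>U. \<bar>f a\<bar>) = (\<Sum>a\<in>U. (r+1) * \<bar>f a\<bar>)" by (simp add: sum_distrib_left)
  also have "\<dots> \<le> (\<Sum>a\<in>U. r*c*conductance \<beta> r a + \<beta> a * \<bar>f a\<bar> powr (r+1) / c powr r)"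
  proof (rule sum_mono)
    fix a assume "a \<in> U"
    hence "\<beta> a > 0" using UA bpos by auto
    thus "(r+1) * \<bar>f a\<bar> \<le> r*c*conductance \<beta> r a + \<beta> a * \<bar>f a\<bar> powr (r+1) / c powr r"
      unfolding conductance_def using arc_ineq[of "\<beta> a" r c "\<bar>f a\<bar>"] rpos cpos by simp
  qed
  also have "\<dots> = r*c*M + (\<Sum>a\<in>U. \<beta> a * \<bar>f a\<bar> powr (r+1)) / c powr r"
    by (simp add: M_def sum.distrib sum_distrib_left sum_divide_distrib)
  also have "\<dots> \<le> r*c*M + d * \<pi>bar / (\<pi>bar / real k)"
    unfolding cr using en pibar kpos by (intro add_left_mono divide_right_mono) auto
  also have "d * \<pi>bar / (\<pi>bar / real k) = real k * d" using pibar kpos by simp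
  finally have "(r+1) * (\<Sum>a\<in>U. \<bar>f a\<bar>) \<le> r*c*M + real k * d" .
  with kd rpos have "(r+1) * (real k * d) \<le> r*c*M + real k * d"
    by (smt (verit) mult_left_mono)
  hence "r * (real k * d) \<le> r * (c * M)" by (simp add: algebra_simps)
  hence key: "real k * d \<le> c * M" using rpos by simp
  have c2: "c = \<pi>bar powr (1/r) / real k powr (1/r)"
    using pibar kpos by (simp add: c_def powr_divide)
  have pp: "\<pi>bar powr (1/r) > 0" "real k powr (1/r) > 0" using pibar kpos by auto
  from key have "real k * d * real k powr (1/r) \<le> \<pi>bar powr (1/r) * M"
    using pp by (simp add: c2 field_simps)
  hence "d / \<pi>bar powr (1/r) \<le> M / (real k * real k powr (1/r))"
    using pp kpos by (simp add: field_simps)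
  moreover have "(\<Sum>i=1..k. \<Sum>a\<in>cut_arcs V A tail head (S i). conductance \<beta> r a) = M"
    using sumU[of "conductance \<beta> r"] by (simp add: M_def C_def)
  ultimately show "1 / (real k * real k powr (1 / r)) *
             (\<Sum>i=1..k. \<Sum>a\<in>cut_arcs V A tail head (S i). conductance \<beta> r a)
           \<ge> d / \<pi>bar powr (1 / r)" by simp
qed
end
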